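(* Let $X$ be a Polish space and $\lambda$ a probability measure on $X$. Let ${\mathbf T}$ be a thinning kernel of type 2 with weights $(t_{n,j})$ satisfying $t_{m,m}>0$ for all $m\ge0$, and normalizations $Z_m$. Let $(p_n)_{n\in\mathbb N_0}$ be non-negative numbers with $\Xi=\sum_{n\ge0}p_n/n!\in(0,\infty)$ and such that $p_{n_0}=0$ implies $p_n=0$ for all $n\ge n_0$. Let ${\mathsf P}$ be the mixed sample process $${\mathsf P}(\phi)=\frac1\Xi\sum_{n\ge0}\frac{p_n}{n!}\int\phi(\delta_{x_1}+\dots+\delta_{x_n})\,\lambda^n(\mathrm dx_1,\dots,\mathrm dx_n).$$ Then for all non-negative measurable $g$ on $X\times\mathcal M_f(X)$, $$\iint g(x,\mu)\,\delta(\mu,x)\,\mu(\mathrm dx)\,{\mathsf P}(\mathrm d\mu)=\iint g(x,\mu+\delta_x)\,\pi(\mu,\mathrm dx)\,{\mathsf P}(\mathrm d\mu).$$ Here, for ${\mathsf P}$-a.e. $\mu$ with $\mu(X)=m$, $$\pi(\mu,\mathrm dx)=\frac{Z_{m+1}}{Z_m}\,\frac{t_{m+1,m}}{t_{m,m}}\,\frac{p_{m+1}}{p_m}\,\lambda(\mathrm dx),\qquad\delta(\mu,x)=\frac{Z_m}{Z_{m-1}}\cdot\frac{t_{m,m-1}}{t_{m-1,m-1}}.$$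
   Context: $\mathcal M_f(X)$ denotes the set of finite counting measures on $X$, and $|\mu|=\mu(X)$. $\mu^{-[m]}$ is the $m$-th falling factorial measure of $\mu$, defined by $\int g\,\mathrm d\mu^{-[m]}=\int\cdots\int g(y_1,\dots,y_m)(\mu-\delta_{y_1}-\dots-\delta_{y_{m-1}})(\mathrm dy_m)\cdots\mu(\mathrm dy_1)$. Write $\delta_{\mathbf y}=\delta_{y_1}+\dots+\delta_{y_m}$. A thinning kernel of type 2 is given by non-negative numbers $(t_{n,j})_{0\le j\le n}$ via $${\mathbf T}_\mu(\phi)=Z_\mu\sum_{m\ge0}\frac{t_{|\mu|,m}}{m!}\int\phi(\delta_{\mathbf y})\,\mu^{-[m]}(\mathrm d{\mathbf y}),\qquad Z_\mu^{-1}=\sum_{j=0}^{|\mu|}\binom{|\mu|}{j}t_{|\mu|,j}.$$ Since $Z_\mu$ depends only on $|\mu|=m$, it is written $Z_m$. *)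

theory Defs
  imports "HOL-Probability.Probability" "HOL-Library.Multiset"
begin

text \<open>Finite counting measures on X are represented by multisets over X.
  The sigma-algebra on M_f(X) is the standard one generated by the maps
  mu |-> mu(B), B measurable.\<close>
definition mset_measure :: "'a measure \<Rightarrow> 'a multiset measure" where
  "mset_measure M = sigma UNIV
     {{\<mu>. size (filter_mset (\<lambda>x. x \<in> B) \<mu>) = k} | B k. B \<in> sets M}"

definition Zn :: "(nat \<Rightarrow> nat \<Rightarrow> real) \<Rightarrow> nat \<Rightarrow> real" where
  "Zn t m = 1 / (\<Sum>j\<le>m. real (m choose j) * t m j)"

definition mixed_sample ::
  "'a measure \<Rightarrow> (nat \<Rightarrow> real) \<Rightarrow> ('a multiset \<Rightarrow> ennreal) \<Rightarrow> ennreal" where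
  "mixed_sample L p \<phi> =
     (\<Sum>n. ennreal (p n / (fact n * (\<Sum>k. p k / fact k))) *
          (\<integral>\<^sup>+ xs. \<phi> (mset (map xs [0..<n])) \<partial>(PiM {..<n} (\<lambda>_. L))))"

text \<open>Density of pi(mu, dx) w.r.t. lambda, for |mu| = m (p m > 0).\<close>
definition pi_dens :: "(nat \<Rightarrow> nat \<Rightarrow> real) \<Rightarrow> (nat \<Rightarrow> real) \<Rightarrow> nat \<Rightarrow> real" where
  "pi_dens t p m = Zn t (m + 1) / Zn t m * (t (m + 1) m / t m m) * (p (m + 1) / p m)"

definition delta_fn :: "(nat \<Rightarrow> nat \<Rightarrow> real) \<Rightarrow> nat \<Rightarrow> real" where
  "delta_fn t m = Zn t m / Zn t (m - 1) * (t m (m - 1) / t (m - 1) (m - 1))"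

end

theory Submission
  imports Defs
begin


lemma size_filter_mset_map:
  "real (size (filter_mset P (mset (map xs [0..<n])))) = (\<Sum>i<n. if P (xs i) then 1 else 0)"
  by (induction n) auto

lemma meas_mu:
  assumes "{..<n} \<subseteq> I"
  shows "(\<lambda>xs. mset (map xs [0..<n])) \<in> measurable (PiM I (\<lambda>_. M)) (mset_measure M)"
  unfolding mset_measure_def
proof (rule measurable_measure_of)
  fix y assume "y \<in> {{\<mu>. size (filter_mset (\<lambda>x. x \<in> B) \<mu>) = k} | B k. B \<in> sets M}"
  then obtain B k where y: "y = {\<mu>. size (filter_mset (\<lambda>x. x \<in> B) \<mu>) = k}" and B: "B \<in> sets M" by blast
  have "(\<lambda>xs. mset (map xs [0..<n])) -` y \<inter> space (PiM I (\<lambda>_. M))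
      = {xs \<in> space (PiM I (\<lambda>_. M)). (\<Sum>i<n. if xs i \<in> B then 1 else 0) = (real k)}"
    unfolding y using size_filter_mset_map[symmetric, where P="\<lambda>x. x \<in> B"]
    by (auto simp del: of_nat_eq_iff simp: of_nat_eq_iff[symmetric])
  also have "\<dots> \<in> sets (PiM I (\<lambda>_. M))"
  proof -
    have "(\<lambda>xs. (\<Sum>i<n. if xs i \<in> B then 1 else 0) :: real) \<in> borel_measurable (PiM I (\<lambda>_. M))"
      using assms B by (intro borel_measurable_sum) (auto intro!: measurable_If_set)
    then show ?thesis by measurable
  qed
  finally show "(\<lambda>xs. mset (map xs [0..<n])) -` y \<inter> space (PiM I (\<lambda>_. M)) \<in> sets (PiM I (\<lambda>_. M))" .
qed auto


lemma meas_comp: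
  assumes h: "h \<in> borel_measurable (M \<Otimes>\<^sub>M mset_measure M)" and j: "j \<in> I" and n: "{..<n} \<subseteq> I"
  shows "(\<lambda>xs. h (xs j, mset (map xs [0..<n]))) \<in> borel_measurable (PiM I (\<lambda>_. M))"
  by (rule measurable_compose[OF measurable_Pair[OF measurable_component_singleton[OF j] meas_mu[OF n]] h])

lemma mset_perm:
  assumes "bij_betw \<sigma> {..<n} {..<n}"
  shows "mset (map (\<lambda>k. \<omega> (\<sigma> k)) [0..<n]) = mset (map \<omega> [0..<n])"
proof -
  have "mset (map (\<lambda>k. \<omega> (\<sigma> k)) [0..<n]) = image_mset \<omega> (image_mset \<sigma> (mset_set {..<n}))"
    by (simp add: atLeast0LessThan multiset.map_comp o_def)
  also have "image_mset \<sigma> (mset_set {..<n}) = mset_set {..<n}"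
    using assms by (simp add: image_mset_mset_set bij_betw_def)
  finally show ?thesis by (simp add: atLeast0LessThan)
qed

lemma upd_img: "image_mset (x((m::nat):=y)) (mset_set {0..<m}) = image_mset x (mset_set {0..<m})"
proof (rule image_mset_cong)
  fix z assume "z \<in># mset_set {0..<m}"
  then have "z < m" by (metis atLeastLessThan_iff elem_mset_set finite_atLeastLessThan)
  then show "(x(m:=y)) z = x z" by simp
qed

lemma perm_integral:
  fixes L :: "'a measure"
  assumes L: "prob_space L" and h: "h \<in> borel_measurable (L \<Otimes>\<^sub>M mset_measure L)"
    and i: "i < Suc m"
  shows "(\<integral>\<^sup>+ xs. h (xs i, mset (map xs [0..<Suc m])) \<partial>PiM {..<Suc m} (\<lambda>_. L))
       = (\<integral>\<^sup>+ xs. h (xs m, mset (map xs [0..<Suc m])) \<partial>PiM {..<Suc m} (\<lambda>_. L))"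
proof -
  define I where "I = {..<Suc m}"
  define \<sigma> where "\<sigma> k = (if k = i then m else if k = m then i else k)" for k
  have bij: "bij_betw \<sigma> I I"
    unfolding bij_betw_def inj_on_def I_def \<sigma>_def using i
    by (auto simp: image_def)
  have D: "distr (PiM I (\<lambda>_. L)) (PiM I (\<lambda>_. L)) (\<lambda>\<omega>. \<lambda>n\<in>I. \<omega> (\<sigma> n)) = PiM I (\<lambda>_. L)"
    using distr_PiM_reindex[of I "\<lambda>_. L" \<sigma> I] L bij by (auto simp: bij_betw_def)
  have T: "(\<lambda>\<omega>. \<lambda>n\<in>I. \<omega> (\<sigma> n)) \<in> measurable (PiM I (\<lambda>_. L)) (PiM I (\<lambda>_. L))"
    using bij by (intro measurable_restrict measurable_component_singleton) (auto simp: bij_betw_def)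
  have mI: "m \<in> I" "{..<Suc m} \<subseteq> I" by (auto simp: I_def)
  have "(\<integral>\<^sup>+ xs. h (xs m, mset (map xs [0..<Suc m])) \<partial>PiM I (\<lambda>_. L))
      = (\<integral>\<^sup>+ xs. h (xs m, mset (map xs [0..<Suc m])) \<partial>distr (PiM I (\<lambda>_. L)) (PiM I (\<lambda>_. L)) (\<lambda>\<omega>. \<lambda>n\<in>I. \<omega> (\<sigma> n)))"
    by (simp add: D)
  also have "\<dots> = (\<integral>\<^sup>+ \<omega>. h ((\<lambda>n\<in>I. \<omega> (\<sigma> n)) m, mset (map (\<lambda>n\<in>I. \<omega> (\<sigma> n)) [0..<Suc m])) \<partial>PiM I (\<lambda>_. L))"
    by (rule nn_integral_distr[OF T]) (use meas_comp[OF h mI] in simp)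
  also have "\<dots> = (\<integral>\<^sup>+ \<omega>. h (\<omega> i, mset (map \<omega> [0..<Suc m])) \<partial>PiM I (\<lambda>_. L))"
  proof (rule nn_integral_cong)
    fix \<omega> :: "nat \<Rightarrow> 'a"
    have a: "map (\<lambda>n\<in>I. \<omega> (\<sigma> n)) [0..<Suc m] = map (\<lambda>n. \<omega> (\<sigma> n)) [0..<Suc m]"
      by (auto simp: I_def)
    have b: "mset (map (\<lambda>n. \<omega> (\<sigma> n)) [0..<Suc m]) = mset (map \<omega> [0..<Suc m])"
      by (rule mset_perm) (use bij in \<open>simp add: I_def\<close>)
    have e1: "(\<lambda>n\<in>I. \<omega> (\<sigma> n)) m = \<omega> i" using mI by (simp add: \<sigma>_def)
    show "h ((\<lambda>n\<in>I. \<omega> (\<sigma> n)) m, mset (map (\<lambda>n\<in>I. \<omega> (\<sigma> n)) [0..<Suc m])) = h (\<omega> i, mset (map \<omega> [0..<Suc m]))"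
      by (simp only: e1 a b)
  qed
  finally have eq: "(\<integral>\<^sup>+ xs. h (xs m, mset (map xs [0..<Suc m])) \<partial>PiM I (\<lambda>_. L))
      = (\<integral>\<^sup>+ \<omega>. h (\<omega> i, mset (map \<omega> [0..<Suc m])) \<partial>PiM I (\<lambda>_. L))" .
  show ?thesis using eq by (simp only: I_def)
qed

lemma upd_mset: "mset (map (x(m:=y)) [0..<Suc m]) = add_mset y (mset (map x [0..<m]))"
proof -
  have "map (x(m:=y)) [0..<m] = map x [0..<m]" by (rule map_cong) auto
  then show ?thesis by simp
qed

lemma key:
  assumes L: "prob_space L" and h: "h \<in> borel_measurable (L \<Otimes>\<^sub>M mset_measure L)"
  shows "(\<integral>\<^sup>+ xs. (\<Sum>i<Suc m. h (xs i, mset (map xs [0..<Suc m]))) \<partial>PiM {..<Suc m} (\<lambda>_. L))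
       = of_nat (Suc m) * (\<integral>\<^sup>+ x. (\<integral>\<^sup>+ y. h (y, add_mset y (mset (map x [0..<m]))) \<partial>L) \<partial>PiM {..<m} (\<lambda>_. L))"
proof -
  interpret product_sigma_finite "\<lambda>_. L"
    unfolding product_sigma_finite_def using L by (simp add: prob_space_imp_sigma_finite)
  have "(\<integral>\<^sup>+ xs. (\<Sum>i<Suc m. h (xs i, mset (map xs [0..<Suc m]))) \<partial>PiM {..<Suc m} (\<lambda>_. L))
     = (\<Sum>i<Suc m. \<integral>\<^sup>+ xs. h (xs i, mset (map xs [0..<Suc m])) \<partial>PiM {..<Suc m} (\<lambda>_. L))"
    by (rule nn_integral_sum) (rule meas_comp[OF h], auto)
  also have "\<dots> = (\<Sum>i<Suc m. \<integral>\<^sup>+ xs. h (xs m, mset (map xs [0..<Suc m])) \<partial>PiM {..<Suc m} (\<lambda>_. L))"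
    by (rule sum.cong[OF refl]) (rule perm_integral[OF L h], simp)
  also have "\<dots> = of_nat (Suc m) * (\<integral>\<^sup>+ xs. h (xs m, mset (map xs [0..<Suc m])) \<partial>PiM {..<Suc m} (\<lambda>_. L))"
    by (simp only: sum_constant card_lessThan)
  also have "(\<integral>\<^sup>+ xs. h (xs m, mset (map xs [0..<Suc m])) \<partial>PiM {..<Suc m} (\<lambda>_. L))
     = (\<integral>\<^sup>+ x. (\<integral>\<^sup>+ y. h ((x(m:=y)) m, mset (map (x(m:=y)) [0..<Suc m])) \<partial>L) \<partial>PiM {..<m} (\<lambda>_. L))"
  proof -
    have M: "(\<lambda>xs. h (xs m, mset (map xs [0..<Suc m]))) \<in> borel_measurable (PiM (insert m {..<m}) (\<lambda>_. L))"
      by (rule meas_comp[OF h]) auto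
    show ?thesis unfolding lessThan_Suc by (rule product_nn_integral_insert[OF _ _ M]) auto
  qed
  also have "\<dots> = (\<integral>\<^sup>+ x. (\<integral>\<^sup>+ y. h (y, add_mset y (mset (map x [0..<m]))) \<partial>L) \<partial>PiM {..<m} (\<lambda>_. L))"
    by (simp only: fun_upd_same upd_mset)
  finally show ?thesis .
qed

lemma meas_inner:
  assumes L: "prob_space L" and h: "h \<in> borel_measurable (L \<Otimes>\<^sub>M mset_measure L)"
  shows "(\<lambda>x. \<integral>\<^sup>+ y. h (y, add_mset y (mset (map x [0..<m]))) \<partial>L) \<in> borel_measurable (PiM {..<m} (\<lambda>_. L))"
proof -
  interpret sigma_finite_measure L using L by (simp add: prob_space_imp_sigma_finite)
  define F where "F xs = h (xs m, mset (map xs [0..<Suc m]))" for xs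
  have F: "F \<in> borel_measurable (PiM (insert m {..<m}) (\<lambda>_. L))"
    unfolding F_def by (rule meas_comp[OF h]) auto
  have "(\<lambda>p. F ((\<lambda>(f, y). f(m := y)) p)) \<in> borel_measurable (PiM {..<m} (\<lambda>_. L) \<Otimes>\<^sub>M L)"
    by (rule measurable_compose[OF measurable_add_dim F])
  moreover have "(\<lambda>p. F ((\<lambda>(f, y). f(m := y)) p)) = (\<lambda>(x,y). h (y, add_mset y (mset (map x [0..<m]))))"
  proof -
    show ?thesis by (auto simp: fun_eq_iff F_def upd_img)
  qed
  ultimately have "case_prod (\<lambda>x y. h (y, add_mset y (mset (map x [0..<m])))) \<in> borel_measurable (PiM {..<m} (\<lambda>_. L) \<Otimes>\<^sub>M L)"
    by (simp only:)
  then show ?thesis by (rule borel_measurable_nn_integral)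
qed


lemma sum_mset_map_mult:
  "sum_mset (image_mset (\<lambda>x. f x * (c::ennreal)) (mset (map xs [0..<n]))) = (\<Sum>i<n. f (xs i)) * c"
  by (induction n) (auto simp: distrib_right)

lemma Zn_nonneg:
  assumes "\<And>j. j \<le> m \<Longrightarrow> t m j \<ge> 0"
  shows "Zn t m \<ge> 0"
  unfolding Zn_def using assms by (intro divide_nonneg_nonneg sum_nonneg) auto

theorem mainTheorem10:
  fixes L :: "'a::polish_space measure"
    and t :: "nat \<Rightarrow> nat \<Rightarrow> real"
    and p :: "nat \<Rightarrow> real"
    and g :: "'a \<times> 'a multiset \<Rightarrow> ennreal"
  assumes "prob_space L"
    and "sets L = sets borel"
    and "\<And>n j. j \<le> n \<Longrightarrow> t n j \<ge> 0"
    and "\<And>m. t m m > 0"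
    and "\<And>n. p n \<ge> 0"
    and "summable (\<lambda>n. p n / fact n)"
    and "(\<Sum>n. p n / fact n) > 0"
    and "\<And>n0 n. p n0 = 0 \<Longrightarrow> n0 \<le> n \<Longrightarrow> p n = 0"
    and "g \<in> borel_measurable (L \<Otimes>\<^sub>M mset_measure L)"
  shows "mixed_sample L p
           (\<lambda>\<mu>. \<Sum>\<^sub># (image_mset (\<lambda>x. g (x, \<mu>) * ennreal (delta_fn t (size \<mu>))) \<mu>))
       = mixed_sample L p
           (\<lambda>\<mu>. ennreal (pi_dens t p (size \<mu>)) * (\<integral>\<^sup>+ x. g (x, add_mset x \<mu>) \<partial>L))"
proof -
  note L = assms(1) and gm = assms(9)
  define X where "X = (\<Sum>k. p k / fact k)"
  have X: "X > 0" using assms(7) by (simp add: X_def)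
  define c where "c n = p n / (fact n * X)" for n
  have c0: "c n \<ge> 0" for n using X assms(5)[of n] by (simp add: c_def)
  define J where "J m = (\<integral>\<^sup>+ x. (\<integral>\<^sup>+ y. g (y, add_mset y (mset (map x [0..<m]))) \<partial>L) \<partial>PiM {..<m} (\<lambda>_. L))" for m
  define a where "a n = ennreal (c n) *
          (\<integral>\<^sup>+ xs. (\<lambda>\<mu>. \<Sum>\<^sub># (image_mset (\<lambda>x. g (x, \<mu>) * ennreal (delta_fn t (size \<mu>))) \<mu>)) (mset (map xs [0..<n])) \<partial>(PiM {..<n} (\<lambda>_. L)))" for n
  define b where "b n = ennreal (c n) *
          (\<integral>\<^sup>+ xs. (\<lambda>\<mu>. ennreal (pi_dens t p (size \<mu>)) * (\<integral>\<^sup>+ x. g (x, add_mset x \<mu>) \<partial>L)) (mset (map xs [0..<n])) \<partial>(PiM {..<n} (\<lambda>_. L)))" for n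
  have LHS: "mixed_sample L p (\<lambda>\<mu>. \<Sum>\<^sub># (image_mset (\<lambda>x. g (x, \<mu>) * ennreal (delta_fn t (size \<mu>))) \<mu>)) = (\<Sum>n. a n)"
    unfolding mixed_sample_def a_def c_def X_def ..
  have RHS: "mixed_sample L p (\<lambda>\<mu>. ennreal (pi_dens t p (size \<mu>)) * (\<integral>\<^sup>+ x. g (x, add_mset x \<mu>) \<partial>L)) = (\<Sum>n. b n)"
    unfolding mixed_sample_def b_def c_def X_def ..
  have a0: "a 0 = 0" by (simp add: a_def)
  have "(\<Sum>n. a n) = (\<Sum>j. a (j + 1)) + (\<Sum>j<1. a j)"
    by (rule suminf_offset) (rule summableI)
  also have "\<dots> = (\<Sum>j. a (Suc j))" using a0 by simp
  finally have Lsum: "(\<Sum>n. a n) = (\<Sum>j. a (Suc j))" .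
  have aS: "a (Suc m) = ennreal (c (Suc m)) * (of_nat (Suc m) * J m * ennreal (delta_fn t (Suc m)))" for m
  proof -
    have "a (Suc m) = ennreal (c (Suc m)) * (\<integral>\<^sup>+ xs. (\<Sum>i<Suc m. g (xs i, mset (map xs [0..<Suc m]))) * ennreal (delta_fn t (Suc m)) \<partial>(PiM {..<Suc m} (\<lambda>_. L)))"
      unfolding a_def by (simp only: sum_mset_map_mult size_mset length_map length_upt diff_zero)
    also have "(\<integral>\<^sup>+ xs. (\<Sum>i<Suc m. g (xs i, mset (map xs [0..<Suc m]))) * ennreal (delta_fn t (Suc m)) \<partial>(PiM {..<Suc m} (\<lambda>_. L)))
       = (\<integral>\<^sup>+ xs. (\<Sum>i<Suc m. g (xs i, mset (map xs [0..<Suc m]))) \<partial>(PiM {..<Suc m} (\<lambda>_. L))) * ennreal (delta_fn t (Suc m))"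
      by (rule nn_integral_multc) (intro borel_measurable_sum meas_comp[OF gm]; auto)
    also have "\<dots> = of_nat (Suc m) * J m * ennreal (delta_fn t (Suc m))"
      unfolding J_def by (subst key[OF L gm]) simp
    finally show ?thesis .
  qed
  have bm: "b m = ennreal (c m) * (ennreal (pi_dens t p m) * J m)" for m
  proof -
    have "b m = ennreal (c m) * (\<integral>\<^sup>+ xs. ennreal (pi_dens t p m) * (\<integral>\<^sup>+ x. g (x, add_mset x (mset (map xs [0..<m]))) \<partial>L) \<partial>(PiM {..<m} (\<lambda>_. L)))"
      unfolding b_def by (simp only: size_mset length_map length_upt diff_zero)
    also have "\<dots> = ennreal (c m) * (ennreal (pi_dens t p m) * J m)"
      unfolding J_def by (subst nn_integral_cmult) (rule meas_inner[OF L gm], simp)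
    finally show ?thesis .
  qed
  have eq: "a (Suc m) = b m" for m
  proof -
    define A where "A = Zn t (Suc m) / Zn t m * (t (Suc m) m / t m m)"
    have A0: "A \<ge> 0" unfolding A_def using Zn_nonneg[of "Suc m" t] Zn_nonneg[of m t] assms(3)[of m "Suc m"] assms(4)[of m] assms(3)
      by (intro mult_nonneg_nonneg divide_nonneg_nonneg) auto
    have dl: "delta_fn t (Suc m) = A" by (simp add: delta_fn_def A_def)
    have pd: "pi_dens t p m = A * (p (Suc m) / p m)" by (simp add: pi_dens_def A_def)
    have pd0: "pi_dens t p m \<ge> 0" unfolding pd using A0 assms(5) by simp
    have real_eq: "c (Suc m) * real (Suc m) * A = c m * pi_dens t p m"
    proof (cases "p m = 0")
      case True
      then have "p (Suc m) = 0" using assms(8)[of m "Suc m"] by simp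
      then show ?thesis using True by (simp add: c_def pd)
    next
      case False
      have h1: "c (Suc m) * real (Suc m) = p (Suc m) / (fact m * X)"
        unfolding c_def fact_Suc using X by (simp del: of_nat_Suc add: field_simps)
      have h2: "c m * pi_dens t p m = p (Suc m) / (fact m * X) * A"
        unfolding c_def pd using X False by (simp add: field_simps)
      show ?thesis unfolding h2 h1[symmetric] ..
    qed
    have e3: "ennreal (c (Suc m) * real (Suc m) * A) = ennreal (c (Suc m)) * of_nat (Suc m) * ennreal A"
      using c0[of "Suc m"] A0 by (simp add: ennreal_mult ennreal_of_nat_eq_real_of_nat del: of_nat_Suc)
    have "a (Suc m) = ennreal (c (Suc m) * real (Suc m) * A) * J m"
      unfolding aS dl e3 by (simp only: mult_ac)
    also have "\<dots> = ennreal (c m * pi_dens t p m) * J m" by (simp only: real_eq)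
    also have "\<dots> = b m" unfolding bm using c0[of m] pd0 by (simp only: ennreal_mult mult_ac)
    finally show ?thesis .
  qed
  show ?thesis unfolding LHS RHS Lsum eq ..
qed

end
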